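(* In the setting described in the context, let $\mathcal{S}_{\Lambda,u_{1,\infty},N}=\{(V,u):V\in\Lambda,\ u\in\mathcal{S}_{V,u_\infty(V)},\ u(N)\in B_{\mathbb{R}^d}(u_{1,\infty},\varepsilon_1)\}$. Then the map $\Phi^{-1}(\mathcal{W})\to\mathcal{S}_{\Lambda,u_{1,\infty},N}$, $(u_0,u_N,V)\mapsto\bigl(V,\ r\mapsto \pi_u S_V((0,r),(u_0,0))\bigr)$, where $\pi_u$ denotes the projection $(u,v)\mapsto u$, is well defined and one-to-one.
   Context: Let $n\ge2$, $d\ge1$, $k\ge1$, $R>0$, $\mathcal{V}_{\mathrm{quad}}(R)=\{V\in\mathcal{C}^{k+1}(\mathbb{R}^d,\mathbb{R}):V(u)=|u|^2/2\text{ for }|u|\ge R\}$ (topology: neighbourhoods $V+\mathcal{O}$, $\mathcal{O}$ open in $\mathcal{C}^{k+1}_b$ with the norm $\max_{|\alpha|\le k+1}\|\partial^\alpha\cdot\|_{L^\infty}$). For $V\in\mathcal{V}_{\mathrm{quad}}(R)$, $S_V((r_1,r),(u_1,v_1))$ denotes the value at $r$ of the (globally defined) solution of $\dot u=v$, $\dot v=-\frac{n-1}{r}v+\nabla V(u)$ equal to $(u_1,v_1)$ at $r_1>0$, and $S_V((0,r),(u_0,0))=(u(r),\dot u(r))$ where $u$ is the unique solution of $\ddot u=-\frac{n-1}{r}\dot u+\nabla V(u)$ with $(u(r),\dot u(r))\to(u_0,0)$ as $r\to0^+$. For $p\in\mathbb{R}^d$, $\mathcal{S}_{V,p}$ is the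 set of $u:[0,+\infty)\to\mathbb{R}^d$ solving this equation on $(0,+\infty)$ with $\dot u(r)\to0$ as $r\to0^+$ and $u(r)\to p$ as $r\to+\infty$. Setting: $V_1\in\mathcal{V}_{\mathrm{quad}}(R)$, $u_{1,\infty}$ a nondegenerate minimum point of $V_1$; $\Lambda$ a neighbourhood of $V_1$ in $\mathcal{V}_{\mathrm{quad}}(R)$, $\varepsilon_1,c_1>0$, and $u_\infty:\Lambda\to\mathbb{R}^d$ a $\mathcal{C}^k$ map with $u_\infty(V_1)=u_{1,\infty}$, $u_\infty(V)$ a local minimum point of $V$, such that for every $V\in\Lambda$ there is a $\mathcal{C}^k$ map $w_V:\bar B_{\mathbb{R}^d}(u_{1,\infty},\varepsilon_1)\times[0,c_1]\to\mathbb{R}^d$ ($\mathcal{C}^k$ jointly in $(u,c,V)$) with the property: for $(u_0,v_0,c_0)\in\bar B_{\mathbb{R}^d}(u_{1,\infty},\varepsilon_1)\times\mathbb{R}^d\times(0,c_1]$, $v_0=w_V(u_0,c_0)$ iff the solution of $u_r=v$, $v_r=-(n-1)cv+\nabla V(u)$, $c_r=-c^2$ with initial condition $(u_0,v_0,c_0)$ at time $1/c_0$ is defined up to $+\infty$, stays in $\bar B_{\mathbb{R}^d}(u_{1,\infty},\varepsilon_1)\times\mathbb{R}^d\times[0,c_1]$ and tends to $(u_\infty(V),0,0)$. Let $N$ be an integer with $N\ge 1/c_1$, $\mathcal{M}=\mathbb{R}^d\times B_{\mathbb{R}^d}(u_{1,\infty},\varepsilon_1)$, $\mathcal{N}=(\mathbb{R}^{2d})^2$,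 $\mathcal{W}=\{(A,B)\in\mathcal{N}:A=B\}$, $\Phi^u(u_0,V)=S_V((0,N),(u_0,0))$, $\Phi^{cs}(u_N,V)=(u_N,w_V(u_N,1/N))$, and $\Phi:\mathcal{M}\times\Lambda\to\mathcal{N}$, $\Phi(u_0,u_N,V)=(\Phi^u(u_0,V),\Phi^{cs}(u_N,V))$. *)

theory Defs
  imports "HOL-Analysis.Analysis"
begin

fun Ck_on :: "nat \<Rightarrow> 'a::euclidean_space set \<Rightarrow> ('a \<Rightarrow> 'b::real_normed_vector) \<Rightarrow> bool" where
  "Ck_on 0 S f = continuous_on S f"
| "Ck_on (Suc m) S f = (f differentiable_on S \<and>
      (\<forall>v. Ck_on m S (\<lambda>x. frechet_derivative f (at x) v)))"

definition grad :: "('a::euclidean_space \<Rightarrow> real) \<Rightarrow> 'a \<Rightarrow> 'a" where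
  "grad V x = (\<Sum>b\<in>Basis. frechet_derivative V (at x) b *\<^sub>R b)"

text \<open>Iterated partial derivative along a list of basis directions (multi-index).\<close>
fun pderiv_multi :: "'a::euclidean_space list \<Rightarrow> ('a \<Rightarrow> real) \<Rightarrow> 'a \<Rightarrow> real" where
  "pderiv_multi [] f = f"
| "pderiv_multi (b # bs) f = (\<lambda>x. frechet_derivative (pderiv_multi bs f) (at x) b)"

definition Vquad :: "nat \<Rightarrow> real \<Rightarrow> ('a::euclidean_space \<Rightarrow> real) set" where
  "Vquad k R = {V. Ck_on (Suc k) UNIV V \<and> (\<forall>u. norm u \<ge> R \<longrightarrow> V u = (norm u)\<^sup>2 / 2)}"

text \<open>Lambda is a neighbourhood of V1 in V_quad(R) for the C^(k+1)_b topology.\<close>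
definition is_nbhd_Vquad :: "nat \<Rightarrow> real \<Rightarrow> ('a::euclidean_space \<Rightarrow> real) set \<Rightarrow> ('a \<Rightarrow> real) \<Rightarrow> bool" where
  "is_nbhd_Vquad k R \<Lambda> V1 \<longleftrightarrow> \<Lambda> \<subseteq> Vquad k R \<and> V1 \<in> \<Lambda> \<and>
     (\<exists>\<delta>>0. \<forall>V\<in>Vquad k R.
        (\<forall>bs. set bs \<subseteq> Basis \<and> length bs \<le> Suc k \<longrightarrow>
              (\<forall>x. \<bar>pderiv_multi bs (\<lambda>y. V y - V1 y) x\<bar> < \<delta>)) \<longrightarrow> V \<in> \<Lambda>)"

definition local_min_point :: "('a::euclidean_space \<Rightarrow> real) \<Rightarrow> 'a \<Rightarrow> bool" where
  "local_min_point V p \<longleftrightarrow> (\<exists>e>0. \<forall>x\<in>ball p e. V p \<le> V x)"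

definition nondeg_min_point :: "('a::euclidean_space \<Rightarrow> real) \<Rightarrow> 'a \<Rightarrow> bool" where
  "nondeg_min_point V p \<longleftrightarrow> local_min_point V p \<and>
     (\<forall>h. h \<noteq> 0 \<longrightarrow> frechet_derivative (\<lambda>x. frechet_derivative V (at x) h) (at p) h > 0)"

definition centered_sol :: "nat \<Rightarrow> ('a::euclidean_space \<Rightarrow> real) \<Rightarrow> 'a \<Rightarrow> (real \<Rightarrow> 'a \<times> 'a) \<Rightarrow> bool" where
  "centered_sol n V u0 y \<longleftrightarrow>
     (\<forall>r>0. ((\<lambda>s. fst (y s)) has_vector_derivative snd (y r)) (at r) \<and>
            ((\<lambda>s. snd (y s)) has_vector_derivative
               (- ((real n - 1) / r) *\<^sub>R snd (y r) + grad V (fst (y r)))) (at r)) \<and>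
     (y \<longlongrightarrow> (u0, 0)) (at_right 0) \<and>
     (\<forall>r\<le>0. y r = (u0, 0))"

text \<open>S_V((0,r),(u0,0)) (with value (u0,0) at r = 0).\<close>
definition S0 :: "nat \<Rightarrow> ('a::euclidean_space \<Rightarrow> real) \<Rightarrow> 'a \<Rightarrow> real \<Rightarrow> 'a \<times> 'a" where
  "S0 n V u0 r = (THE y. centered_sol n V u0 y) r"

definition radial_set :: "nat \<Rightarrow> ('a::euclidean_space \<Rightarrow> real) \<Rightarrow> 'a \<Rightarrow> (real \<Rightarrow> 'a) set" where
  "radial_set n V p = {u. \<exists>u'. continuous_on {0..} u \<and>
     (\<forall>r>0. (u has_vector_derivative u' r) (at r) \<and>
            (u' has_vector_derivative (- ((real n - 1) / r) *\<^sub>R u' r + grad V (u r))) (at r)) \<and>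
     (u' \<longlongrightarrow> 0) (at_right 0) \<and> (u \<longlongrightarrow> p) at_top}"

definition auto_field :: "nat \<Rightarrow> ('a::euclidean_space \<Rightarrow> real) \<Rightarrow> 'a \<times> 'a \<times> real \<Rightarrow> 'a \<times> 'a \<times> real" where
  "auto_field n V z = (case z of (u, v, c) \<Rightarrow>
     (v, - ((real n - 1) * c) *\<^sub>R v + grad V u, - (c\<^sup>2)))"

definition stable_data ::
  "nat \<Rightarrow> ('a::euclidean_space \<Rightarrow> real) \<Rightarrow> 'a \<Rightarrow> real \<Rightarrow> real \<Rightarrow> 'a \<Rightarrow> 'a \<Rightarrow> 'a \<Rightarrow> real \<Rightarrow> bool" where
  "stable_data n V u1 \<epsilon>1 c1 p u0 v0 c0 \<longleftrightarrow>
     (\<exists>z :: real \<Rightarrow> 'a \<times> 'a \<times> real.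
        z (1 / c0) = (u0, v0, c0) \<and>
        (\<forall>r\<ge>1 / c0. (z has_vector_derivative auto_field n V (z r)) (at r within {1 / c0..}) \<and>
                     z r \<in> cball u1 \<epsilon>1 \<times> UNIV \<times> {0..c1}) \<and>
        (z \<longlongrightarrow> (p, 0, 0)) at_top)"

end

theory Submission
  imports Defs
begin

unbundle inner_syntax



lemma gronwall_zero:
  fixes f :: "real \<Rightarrow> 'b::real_inner"
  assumes ab: "a \<le> b" and contf: "continuous_on {a..b} f"
    and der: "\<And>t. a < t \<Longrightarrow> t < b \<Longrightarrow> (f has_vector_derivative f' t) (at t)"
    and bnd: "\<And>t. a < t \<Longrightarrow> t < b \<Longrightarrow> norm (f' t) \<le> K * norm (f t)"
    and fa: "f a = 0"
    and t: "t \<in> {a..b}"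
  shows "f t = 0"
proof (cases "t = a")
  case True then show ?thesis using fa by simp
next
  case False
  with t have at: "a < t" "t \<le> b" by auto
  define psi where "psi s = exp (- 2 * K * s) * (f s \<bullet> f s)" for s
  define D where "D s = exp (- 2 * K * s) * (- 2 * K) * (f s \<bullet> f s) + exp (- 2 * K * s) * (2 * (f s \<bullet> f' s))" for s
  have cont: "continuous_on {a..t} psi"
    unfolding psi_def using contf at
    by (intro continuous_intros) (auto intro: continuous_on_subset)
  have dpsi: "(psi has_derivative (\<lambda>h. h * D s)) (at s)" if "a < s" "s < t" for s
  proof -
    have fd: "(f has_derivative (\<lambda>h. h *\<^sub>R f' s)) (at s)"
      using der[of s] that at by (simp add: has_vector_derivative_def)
    have d1: "((\<lambda>s. f s \<bullet> f s) has_derivative (\<lambda>h. f s \<bullet> (h *\<^sub>R f' s) + (h *\<^sub>R f' s) \<bullet> f s)) (at s)"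
      by (rule has_derivative_inner[OF fd fd])
    have d2: "((\<lambda>s. exp (- 2 * K * s)) has_derivative (\<lambda>h. h * (exp (- 2 * K * s) * (- 2 * K)))) (at s)"
      by (auto intro!: derivative_eq_intros simp: algebra_simps)
    show ?thesis unfolding psi_def
      by (rule has_derivative_eq_rhs[OF has_derivative_mult[OF d2 d1]]) (simp add: D_def fun_eq_iff inner_commute algebra_simps)
  qed
  obtain xi where xi: "a < xi" "xi < t" "psi t - psi a = (t - a) * D xi"
    using mvt[OF at(1) cont dpsi] by auto
  have "f xi \<bullet> f' xi \<le> norm (f xi) * norm (f' xi)"
    by (metis Cauchy_Schwarz_ineq2 abs_le_iff)
  also have "\<dots> \<le> norm (f xi) * (K * norm (f xi))"
    using bnd[of xi] xi at by (intro mult_left_mono) auto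
  also have "\<dots> = K * (f xi \<bullet> f xi)"
    by (simp add: power2_norm_eq_inner[symmetric] power2_eq_square)
  finally have le: "f xi \<bullet> f' xi - K * (f xi \<bullet> f xi) \<le> 0" by simp
  have "D xi = (2 * exp (- 2 * K * xi)) * (f xi \<bullet> f' xi - K * (f xi \<bullet> f xi))"
    by (simp add: D_def algebra_simps)
  also have "\<dots> \<le> 0" by (rule mult_nonneg_nonpos[OF _ le]) simp
  finally have "D xi \<le> 0" .
  then have "psi t \<le> 0" using xi at fa by (simp add: psi_def mult_nonneg_nonpos)
  then have "f t \<bullet> f t \<le> 0" unfolding psi_def
    by (simp add: mult_le_0_iff)
  then show ?thesis by (metis inner_eq_zero_iff inner_ge_zero order_antisym)
qed




lemma Ck_on_cont: "Ck_on m S f \<Longrightarrow> continuous_on S f"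
  by (cases m) (auto intro: differentiable_imp_continuous_on)

lemma open_norm_gt: "open {z::'a::real_normed_vector. R < norm z}"
  by (intro open_Collect_less continuous_intros)

lemma quad_deriv_local:
  fixes V :: "'a::euclidean_space \<Rightarrow> real"
  assumes quad: "\<And>u. norm u \<ge> R \<Longrightarrow> V u = (norm u)\<^sup>2 / 2"
    and y: "R < norm y"
  shows "frechet_derivative V (at y) = (\<lambda>h. y \<bullet> h)"
proof -
  have "((\<lambda>z. (z \<bullet> z) / 2) has_derivative (\<lambda>h. y \<bullet> h)) (at y)"
    by (auto intro!: derivative_eq_intros simp: inner_commute fun_eq_iff)
  then have "(V has_derivative (\<lambda>h. y \<bullet> h)) (at y)"
    by (rule has_derivative_transform_within_open[where s="{z. R < norm z}"])
       (use y quad in \<open>auto simp: open_norm_gt power2_norm_eq_inner\<close>)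
  then show ?thesis by (rule frechet_derivative_at[symmetric])
qed

lemma grad_lipschitz:
  fixes V :: "'a::euclidean_space \<Rightarrow> real"
  assumes V: "V \<in> Vquad k R" and k: "k \<ge> 1"
  shows "\<exists>L>0. \<forall>x y. norm (grad V x - grad V y) \<le> L * norm (x - y)"
proof -
  obtain k' where k': "k = Suc k'" using k by (cases k) auto
  define Dv where "Dv b x = frechet_derivative V (at x) b" for b x
  define D2 where "D2 c b x = frechet_derivative (Dv b) (at x) c" for c b x
  have quad: "\<And>u. norm u \<ge> R \<Longrightarrow> V u = (norm u)\<^sup>2 / 2" using V by (auto simp: Vquad_def)
  have CV: "Ck_on (Suc (Suc k')) UNIV V" using V k' by (auto simp: Vquad_def)
  then have Dvdiff: "Dv b differentiable (at x)" for b x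
    unfolding Dv_def by (auto simp: differentiable_on_def)
  have D2cont: "continuous_on UNIV (D2 c b)" for b c
    using CV unfolding D2_def Dv_def by (auto intro: Ck_on_cont)
  have Dv_out: "Dv b y = y \<bullet> b" if "R < norm y" for b y
    using quad_deriv_local[OF quad that] by (simp add: Dv_def)
  have D2_out: "D2 c b x = c \<bullet> b" if x: "R < norm x" for b c x
  proof -
    have "((\<lambda>y. y \<bullet> b) has_derivative (\<lambda>h. h \<bullet> b)) (at x)"
      by (auto intro!: derivative_eq_intros)
    then have "(Dv b has_derivative (\<lambda>h. h \<bullet> b)) (at x)"
      by (rule has_derivative_transform_within_open[where s="{z. R < norm z}"])
         (use x Dv_out in \<open>auto simp: open_norm_gt\<close>)
    then show ?thesis by (simp add: D2_def frechet_derivative_at[symmetric])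
  qed
  define S where "S x = (\<Sum>b\<in>Basis. \<Sum>c\<in>Basis. \<bar>D2 c b x\<bar>)" for x
  have Scont: "continuous_on UNIV S"
    unfolding S_def by (intro continuous_intros continuous_on_sum D2cont)
  have "compact (S ` cball 0 R)"
    by (rule compact_continuous_image[OF continuous_on_subset[OF Scont]]) auto
  then obtain C0 where "\<forall>y\<in>S ` cball 0 R. norm y \<le> C0"
    by (meson bounded_iff compact_imp_bounded)
  then have C0: "\<And>x. x \<in> cball 0 R \<Longrightarrow> \<bar>S x\<bar> \<le> C0" by auto
  define C where "C = max C0 (\<Sum>b\<in>(Basis::'a set). \<Sum>c\<in>(Basis::'a set). 1::real)"
  have SC: "S x \<le> C" for x
  proof (cases "norm x \<le> R")
    case True then show ?thesis using C0[of x] by (auto simp: C_def)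
  next
    case False
    then have "S x = (\<Sum>b\<in>(Basis::'a set). \<Sum>c\<in>(Basis::'a set). \<bar>c \<bullet> b\<bar>)" by (simp add: S_def D2_out)
    also have "\<dots> \<le> (\<Sum>b\<in>(Basis::'a set). \<Sum>c\<in>(Basis::'a set). 1::real)"
      by (intro sum_mono) (auto simp: inner_Basis)
    finally show ?thesis by (simp add: C_def)
  qed
  have S0: "0 \<le> S x" for x by (simp add: S_def sum_nonneg)
  define Gd where "Gd x = (\<lambda>h. \<Sum>b\<in>Basis. frechet_derivative (Dv b) (at x) h *\<^sub>R b)" for x
  have gradeq: "grad V = (\<lambda>x. \<Sum>b\<in>Basis. Dv b x *\<^sub>R b)"
    by (simp add: grad_def Dv_def fun_eq_iff)
  have gd: "(grad V has_derivative Gd x) (at x within UNIV)" for x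
    unfolding gradeq Gd_def
    by (intro has_derivative_sum has_derivative_scaleR_left frechet_derivative_works[THEN iffD1] Dvdiff)
  have lin: "linear (frechet_derivative (Dv b) (at x))" for b x
    using frechet_derivative_works[THEN iffD1, OF Dvdiff[of b x]]
    by (simp add: has_derivative_linear)
  have on: "onorm (Gd x) \<le> C" for x
  proof (rule onorm_le)
    fix h :: 'a
    have e: "frechet_derivative (Dv b) (at x) h = (\<Sum>c\<in>Basis. (h \<bullet> c) * D2 c b x)" for b
    proof -
      have "frechet_derivative (Dv b) (at x) h = frechet_derivative (Dv b) (at x) (\<Sum>c\<in>Basis. (h \<bullet> c) *\<^sub>R c)"
        by (simp add: euclidean_representation)
      also have "\<dots> = (\<Sum>c\<in>Basis. (h \<bullet> c) * D2 c b x)"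
        by (simp add: linear_sum[OF lin] linear_scale[OF lin] D2_def)
      finally show ?thesis .
    qed
    have "norm (Gd x h) \<le> (\<Sum>b\<in>Basis. norm (frechet_derivative (Dv b) (at x) h *\<^sub>R b))"
      unfolding Gd_def by (rule norm_sum)
    also have "\<dots> = (\<Sum>b\<in>Basis. \<bar>\<Sum>c\<in>Basis. (h \<bullet> c) * D2 c b x\<bar>)"
      by (simp add: e)
    also have "\<dots> \<le> (\<Sum>b\<in>Basis. \<Sum>c\<in>Basis. norm h * \<bar>D2 c b x\<bar>)"
    proof (intro sum_mono)
      fix b assume "b \<in> (Basis::'a set)"
      have "\<bar>\<Sum>c\<in>Basis. (h \<bullet> c) * D2 c b x\<bar> \<le> (\<Sum>c\<in>Basis. \<bar>(h \<bullet> c) * D2 c b x\<bar>)"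
        by (rule sum_abs)
      also have "\<dots> \<le> (\<Sum>c\<in>Basis. norm h * \<bar>D2 c b x\<bar>)"
        by (intro sum_mono) (auto simp: abs_mult intro!: mult_right_mono Basis_le_norm)
      finally show "\<bar>\<Sum>c\<in>Basis. (h \<bullet> c) * D2 c b x\<bar> \<le> (\<Sum>c\<in>Basis. norm h * \<bar>D2 c b x\<bar>)" .
    qed
    also have "\<dots> = norm h * S x" by (simp add: S_def sum_distrib_left)
    also have "\<dots> \<le> C * norm h" using SC[of x] by (metis mult.commute mult_left_mono norm_ge_zero)
    finally show "norm (Gd x h) \<le> C * norm h" .
  qed
  have "norm (grad V x - grad V y) \<le> C * norm (x - y)" for x y
    by (rule differentiable_bound[OF convex_UNIV gd on]) auto
  moreover have "C \<ge> 0" using SC[of 0] S0[of 0] by linarith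
  ultimately show ?thesis
    by (intro exI[of _ "C + 1"]) (smt (verit, best) mult_right_mono norm_ge_zero)
qed



lemma lip_cont:
  fixes g :: "'a::real_normed_vector \<Rightarrow> 'b::real_normed_vector"
  assumes L: "\<And>x y. norm (g x - g y) \<le> L * norm (x - y)" and "L \<ge> 0"
  shows "continuous_on S g"
proof -
  have "L-lipschitz_on UNIV g" using assms by (auto simp: lipschitz_on_def dist_norm)
  then show ?thesis using lipschitz_on_continuous_on continuous_on_subset by blast
qed

lemma cont_on_atLeast:
  fixes f :: "real \<Rightarrow> 'b::topological_space"
  assumes "\<And>T. continuous_on {a..T} f"
  shows "continuous_on {a..} f"
  unfolding continuous_on_eq_continuous_within
proof
  fix x assume x: "x \<in> {a..}"
  have "continuous (at x within {a..x+1}) f"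
    using assms[of "x+1"] x by (simp add: continuous_on_eq_continuous_within)
  moreover have "at x within {a..} = at x within {a..x+1}"
    by (rule at_within_nhd[where S="{..<x+1}"]) auto
  ultimately show "continuous (at x within {a..}) f" by (simp add: continuous_within)
qed

lemma int_exp:
  fixes lam s :: real
  assumes lam: "lam > 0" and s: "s \<ge> 0"
  shows "((\<lambda>t. exp (lam * t)) has_integral ((exp (lam * s) - 1) / lam)) {0..s}"
proof -
  have "((\<lambda>t. exp (lam * t)) has_integral ((\<lambda>t. exp (lam * t) / lam) s - (\<lambda>t. exp (lam * t) / lam) 0)) {0..s}"
    by (rule fundamental_theorem_of_calculus[OF s])
       (use lam in \<open>auto intro!: derivative_eq_intros simp: has_real_derivative_iff_has_vector_derivative[symmetric]\<close>)
  then show ?thesis by (simp add: diff_divide_distrib)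
qed

lemma int_bound_exp:
  fixes F :: "real \<Rightarrow> 'a::euclidean_space" and lam s C :: real
  assumes cont: "continuous_on {0..s} F" and s: "s \<ge> 0" and lam: "lam > 0"
    and b: "\<And>t. t \<in> {0..s} \<Longrightarrow> norm (F t) \<le> C * exp (lam * t)"
  shows "norm (integral {0..s} F) \<le> C * exp (lam * s) / lam"
proof -
  have C: "C \<ge> 0" using b[of 0] s by (auto intro: order_trans[OF norm_ge_zero])
  have ie: "((\<lambda>t. C * exp (lam * t)) has_integral (C * ((exp (lam * s) - 1) / lam))) {0..s}"
    by (rule has_integral_mult_right[OF int_exp[OF lam s]])
  have "norm (integral {0..s} F) \<le> integral {0..s} (\<lambda>t. C * exp (lam * t))"
    by (rule integral_norm_bound_integral[OF integrable_continuous_real[OF cont] has_integral_integrable[OF ie] b])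
  also have "\<dots> = C * ((exp (lam * s) - 1) / lam)" using ie by (rule integral_unique)
  also have "\<dots> \<le> C * (exp (lam * s) / lam)"
    by (rule mult_left_mono) (use C lam in \<open>auto intro: divide_right_mono\<close>)
  finally show ?thesis by simp
qed

definition Iw :: "nat \<Rightarrow> (real \<Rightarrow> 'a::euclidean_space) \<Rightarrow> real \<Rightarrow> 'a" where
  "Iw n F s = (if s \<le> 0 then 0 else (1 / s ^ (n - 1)) *\<^sub>R integral {0..s} (\<lambda>t. t ^ (n - 1) *\<^sub>R F t))"

lemma Iw_bound:
  fixes F :: "real \<Rightarrow> 'a::euclidean_space" and lam s C :: real
  assumes cont: "continuous_on UNIV F" and s: "s \<ge> 0" and lam: "lam > 0"
    and b: "\<And>t. t \<in> {0..s} \<Longrightarrow> norm (F t) \<le> C * exp (lam * t)"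
  shows "norm (Iw n F s) \<le> C * exp (lam * s) / lam"
proof (cases "s = 0")
  case True
  have "C \<ge> 0" using b[of 0] s by (auto intro: order_trans[OF norm_ge_zero])
  then show ?thesis using True lam by (simp add: Iw_def)
next
  case False
  then have sp: "s > 0" using s by auto
  have "norm (integral {0..s} (\<lambda>t. t ^ (n - 1) *\<^sub>R F t)) \<le> (s ^ (n - 1) * C) * exp (lam * s) / lam"
  proof (rule int_bound_exp[OF _ s lam])
    show "continuous_on {0..s} (\<lambda>t. t ^ (n - 1) *\<^sub>R F t)"
      by (intro continuous_intros continuous_on_subset[OF cont]) auto
    fix t assume t: "t \<in> {0..s}"
    have "norm (t ^ (n - 1) *\<^sub>R F t) = t ^ (n - 1) * norm (F t)" using t by simp
    also have "\<dots> \<le> s ^ (n - 1) * (C * exp (lam * t))"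
      using t b[OF t] by (intro mult_mono power_mono) auto
    finally show "norm (t ^ (n - 1) *\<^sub>R F t) \<le> s ^ (n - 1) * C * exp (lam * t)" by simp
  qed
  then have "norm (integral {0..s} (\<lambda>t. t ^ (n - 1) *\<^sub>R F t)) / s ^ (n - 1) \<le> ((s ^ (n - 1) * C) * exp (lam * s) / lam) / s ^ (n - 1)"
    by (rule divide_right_mono) (use sp in simp)
  moreover have "norm (Iw n F s) = norm (integral {0..s} (\<lambda>t. t ^ (n - 1) *\<^sub>R F t)) / s ^ (n - 1)"
    using sp by (simp add: Iw_def)
  ultimately show ?thesis using sp by simp
qed

lemma inv_pow_deriv: "s > (0::real) \<Longrightarrow> ((\<lambda>s. 1 / s ^ Suc m) has_real_derivative (- real (Suc m) / s ^ Suc (Suc m))) (at s)"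
  apply (rule derivative_eq_intros refl | simp)+
  apply (simp add: field_simps)
  done

lemma int_deriv_at:
  fixes F :: "real \<Rightarrow> 'a::euclidean_space"
  assumes cont: "continuous_on UNIV F" and s: "s > 0"
  shows "((\<lambda>s. integral {0..s} F) has_vector_derivative F s) (at s)"
proof -
  have "((\<lambda>s. integral {0..s} F) has_vector_derivative F s) (at s within {0..s+1})"
    by (rule integral_has_vector_derivative) (use s in \<open>auto intro: continuous_on_subset[OF cont]\<close>)
  moreover have "at s within {0..s+1} = at s"
    by (rule at_within_interior) (use s in auto)
  ultimately show ?thesis by simp
qed

lemma Iw_deriv:
  fixes F :: "real \<Rightarrow> 'a::euclidean_space"
  assumes n: "n \<ge> 2" and cont: "continuous_on UNIV F" and s: "s > 0"
  shows "(Iw n F has_vector_derivative (- ((real n - 1) / s)) *\<^sub>R Iw n F s + F s) (at s)"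
proof -
  obtain m where m: "n - 1 = Suc m" using n by (intro that[of "n - 2"]) auto
  have rn: "real n - 1 = real (Suc m)" using m n by simp
  define G where "G s = integral {0..s} (\<lambda>t. t ^ (n - 1) *\<^sub>R F t)" for s
  have G: "(G has_vector_derivative s ^ (n - 1) *\<^sub>R F s) (at s)"
    unfolding G_def by (rule int_deriv_at[OF _ s]) (intro continuous_intros cont)
  have H: "((\<lambda>s. (1 / s ^ Suc m) *\<^sub>R G s) has_vector_derivative
      (1 / s ^ Suc m) *\<^sub>R (s ^ (n - 1) *\<^sub>R F s) + (- real (Suc m) / s ^ Suc (Suc m)) *\<^sub>R G s) (at s)"
    by (rule has_vector_derivative_scaleR[OF inv_pow_deriv[OF s] G])
  have m': "n - Suc 0 = Suc m" using m by simp
  have IwG: "Iw n F s = (1 / s ^ Suc m) *\<^sub>R G s" using s by (simp add: Iw_def G_def m')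
  have eq: "(1 / s ^ Suc m) *\<^sub>R (s ^ (n - 1) *\<^sub>R F s) + (- real (Suc m) / s ^ Suc (Suc m)) *\<^sub>R G s
      = (- ((real n - 1) / s)) *\<^sub>R Iw n F s + F s"
    unfolding IwG rn m using s by (simp add: field_simps) (simp add: scaleR_add_left[symmetric] add_divide_distrib[symmetric])
  have "((\<lambda>s. (1 / s ^ Suc m) *\<^sub>R G s) has_vector_derivative (- ((real n - 1) / s)) *\<^sub>R Iw n F s + F s) (at s)"
    using H eq by simp
  then show ?thesis
    apply (rule has_vector_derivative_transform_within_open[where S="{0<..}"])
    using s apply simp_all
    subgoal for y unfolding Iw_def G_def by (simp add: m')
    done
qed

lemma Iw_zero: "s \<le> 0 \<Longrightarrow> Iw n F s = 0" by (simp add: Iw_def)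

lemma Iw_cont:
  fixes F :: "real \<Rightarrow> 'a::euclidean_space"
  assumes n: "n \<ge> 2" and cont: "continuous_on UNIV F"
  shows "continuous_on UNIV (Iw n F)"
  unfolding continuous_on_eq_continuous_within
proof
  fix s :: real
  show "continuous (at s within UNIV) (Iw n F)"
  proof (cases "s > 0")
    case True
    then show ?thesis
      using Iw_deriv[OF n cont True] by (simp add: has_vector_derivative_continuous)
  next
    case False
    show ?thesis
    proof (cases "s < 0")
      case True
      have "((\<lambda>_. 0::'a) has_vector_derivative 0) (at s)" by (rule has_vector_derivative_const)
      then have "(Iw n F has_vector_derivative 0) (at s)"
        by (rule has_vector_derivative_transform_within_open[where S="{..<0}"])
           (use True in \<open>auto simp: Iw_def\<close>)
      then show ?thesis by (simp add: has_vector_derivative_continuous)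
    next
      case False
      with \<open>\<not> s > 0\<close> have s0: "s = 0" by auto
      have "compact (F ` {0..1})" by (rule compact_continuous_image[OF continuous_on_subset[OF cont]]) auto
      then obtain B where B: "\<forall>y\<in>F ` {0..1}. norm y \<le> B"
        by (meson bounded_iff compact_imp_bounded)
      have bnd: "norm (Iw n F t) \<le> \<bar>t\<bar> * B" if t: "\<bar>t\<bar> < 1" for t
      proof (cases "t > 0")
        case False
        have "norm (F 0) \<le> B" using B by auto
        then have "B \<ge> 0" by (meson norm_ge_zero order_trans)
        then show ?thesis using False by (simp add: Iw_def mult_nonpos_nonneg)
      next
        case True
        have "norm (integral {0..t} (\<lambda>x. x ^ (n - 1) *\<^sub>R F x)) \<le> integral {0..t} (\<lambda>x. t ^ (n - 1) * B)"
        proof (rule integral_norm_bound_integral)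
          show "(\<lambda>x. x ^ (n - 1) *\<^sub>R F x) integrable_on {0..t}"
            by (intro integrable_continuous_real continuous_intros continuous_on_subset[OF cont]) auto
          fix x assume x: "x \<in> {0..t}"
          have "norm (x ^ (n - 1) *\<^sub>R F x) = x ^ (n - 1) * norm (F x)" using x by simp
          also have "\<dots> \<le> t ^ (n - 1) * B"
            using x t B by (intro mult_mono power_mono) auto
          finally show "norm (x ^ (n - 1) *\<^sub>R F x) \<le> t ^ (n - 1) * B" .
        qed auto
        also have "\<dots> = t * (t ^ (n - 1) * B)" using True by simp
        finally have "norm (integral {0..t} (\<lambda>x. x ^ (n - 1) *\<^sub>R F x)) / t ^ (n - 1) \<le> (t * (t ^ (n - 1) * B)) / t ^ (n - 1)"
          by (rule divide_right_mono) (use True in simp)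
        then show ?thesis using True by (simp add: Iw_def)
      qed
      have "(Iw n F \<longlongrightarrow> 0) (at 0)"
      proof (rule Lim_null_comparison)
        show "\<forall>\<^sub>F t in at 0. norm (Iw n F t) \<le> \<bar>t\<bar> * B"
          unfolding eventually_at by (intro exI[of _ 1]) (auto intro: bnd simp: dist_norm)
        show "((\<lambda>t. \<bar>t\<bar> * B) \<longlongrightarrow> 0) (at 0)"
          by (rule tendsto_eq_intros refl | simp)+
      qed
      then show ?thesis using s0 by (simp add: continuous_within Iw_def tendsto_at_iff_tendsto_nhds[symmetric])
    qed
  qed
qed



lemma Iw_diff:
  fixes F G :: "real \<Rightarrow> 'a::euclidean_space"
  assumes "continuous_on UNIV F" "continuous_on UNIV G"
  shows "Iw n F s - Iw n G s = Iw n (\<lambda>x. F x - G x) s"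
proof -
  have "integral {0..s} (\<lambda>t. t ^ (n - 1) *\<^sub>R F t) - integral {0..s} (\<lambda>t. t ^ (n - 1) *\<^sub>R G t)
      = integral {0..s} (\<lambda>t. t ^ (n - 1) *\<^sub>R (F t - G t))"
    by (subst integral_diff[symmetric])
       (auto intro!: integrable_continuous_real continuous_intros continuous_on_subset[OF assms(1)]
          continuous_on_subset[OF assms(2)] simp: scaleR_diff_right)
  then show ?thesis by (simp add: Iw_def scaleR_diff_right[symmetric])
qed

lemma int_cont_atLeast:
  fixes F :: "real \<Rightarrow> 'a::euclidean_space"
  assumes "continuous_on UNIV F"
  shows "continuous_on {0..} (\<lambda>t. integral {0..t} F)"
  by (rule cont_on_atLeast, rule indefinite_integral_continuous_1,
      rule integrable_continuous_real, rule continuous_on_subset[OF assms]) auto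

lemma exists_fp:
  fixes g :: "'a::euclidean_space \<Rightarrow> 'a" and u0 :: 'a
  assumes n: "n \<ge> 2" and L: "L > 0" and lip: "\<And>x y. norm (g x - g y) \<le> L * norm (x - y)"
  shows "\<exists>u. continuous_on UNIV u \<and> (\<forall>t\<ge>0. u t = u0 + integral {0..t} (Iw n (\<lambda>s. g (u s))))"
proof -
  define lam where "lam = 2 * L + 1"
  have lam: "lam > 0" using L by (simp add: lam_def)
  have gc: "continuous_on S g" for S using lip_cont[OF lip] L by simp
  define uf where "uf \<phi> t = exp (lam * max t 0) *\<^sub>R apply_bcontfun \<phi> t" for \<phi> :: "real \<Rightarrow>\<^sub>C 'a" and t
  define U where "U u t = u0 + integral {0..t} (Iw n (\<lambda>s. g (u s)))" for u :: "real \<Rightarrow> 'a" and t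
  define T0 where "T0 \<phi> = (\<lambda>t. exp (- lam * max t 0) *\<^sub>R U (uf \<phi>) (max t 0))" for \<phi>
  have ufc: "continuous_on UNIV (uf \<phi>)" for \<phi>
    unfolding uf_def by (intro continuous_intros) auto
  have Fc: "continuous_on UNIV (\<lambda>s. g (uf \<phi> s))" for \<phi>
    by (rule continuous_on_compose2[OF gc ufc]) auto
  have Iwc: "continuous_on UNIV (Iw n (\<lambda>s. g (uf \<phi> s)))" for \<phi>
    by (rule Iw_cont[OF n Fc])
  have Uc: "continuous_on {0..} (U (uf \<phi>))" for \<phi>
    unfolding U_def by (intro continuous_intros int_cont_atLeast Iwc)
  have Ub: "\<exists>B. \<forall>t\<ge>0. norm (U (uf \<phi>) t) \<le> B * exp (lam * t)" for \<phi>
  proof -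
    obtain P where P: "\<And>t. norm (apply_bcontfun \<phi> t) \<le> P"
      using bounded_apply_bcontfun[of \<phi>] unfolding bounded_iff by blast
    have P0: "P \<ge> 0" using P[of 0] norm_ge_zero order_trans by blast
    define C1 where "C1 = norm (g 0) + L * P"
    have gb: "norm (g (uf \<phi> s)) \<le> C1 * exp (lam * s)" if s: "s \<in> {0..t}" for s t
    proof -
      have "norm (g (uf \<phi> s)) \<le> norm (g 0) + norm (g (uf \<phi> s) - g 0)"
        by (metis add.commute diff_add_cancel norm_triangle_ineq)
      also have "\<dots> \<le> norm (g 0) + L * norm (uf \<phi> s)" using lip[of "uf \<phi> s" 0] by simp
      also have "norm (uf \<phi> s) = exp (lam * s) * norm (apply_bcontfun \<phi> s)"
        using s by (simp add: uf_def)
      also have "norm (g 0) + L * (exp (lam * s) * norm (apply_bcontfun \<phi> s)) \<le> norm (g 0) * exp (lam * s) + L * (exp (lam * s) * P)"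
      proof (rule add_mono)
        have "1 \<le> exp (lam * s)" using s lam by simp
        then show "norm (g 0) \<le> norm (g 0) * exp (lam * s)"
          using mult_left_mono[of 1 "exp (lam * s)" "norm (g 0)"] by simp
        show "L * (exp (lam * s) * norm (apply_bcontfun \<phi> s)) \<le> L * (exp (lam * s) * P)"
          using L P[of s] by (intro mult_left_mono) auto
      qed
      finally show ?thesis by (simp add: C1_def algebra_simps)
    qed
    have ib: "norm (Iw n (\<lambda>s. g (uf \<phi> s)) s) \<le> (C1 / lam) * exp (lam * s)" if "s \<in> {0..t}" for s t
    proof -
      have "norm (Iw n (\<lambda>s. g (uf \<phi> s)) s) \<le> C1 * exp (lam * s) / lam"
        by (rule Iw_bound[OF Fc _ lam]) (use that gb in auto)
      then show ?thesis by simp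
    qed
    have "norm (U (uf \<phi>) t) \<le> norm u0 * exp (lam * t) + (C1 / lam / lam) * exp (lam * t)" if t: "t \<ge> 0" for t
    proof -
      have "norm (integral {0..t} (Iw n (\<lambda>s. g (uf \<phi> s)))) \<le> (C1 / lam) * exp (lam * t) / lam"
        by (rule int_bound_exp[OF continuous_on_subset[OF Iwc] t lam ib]) auto
      moreover have "norm u0 \<le> norm u0 * exp (lam * t)"
      proof -
        have "1 \<le> exp (lam * t)" using t lam by simp
        then show ?thesis using mult_left_mono[of 1 "exp (lam * t)" "norm u0"] by simp
      qed
      ultimately show ?thesis unfolding U_def
        by (smt (verit) norm_triangle_ineq times_divide_eq_left mult.commute)
    qed
    then show ?thesis by (intro exI[of _ "norm u0 + C1 / lam / lam"]) (simp add: algebra_simps)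
  qed
  have mem: "T0 \<phi> \<in> bcontfun" for \<phi>
  proof -
    have c: "continuous_on UNIV (T0 \<phi>)"
      unfolding T0_def
      by (rule continuous_on_compose2[of "{0..}" "\<lambda>t. exp (- lam * t) *\<^sub>R U (uf \<phi>) t"])
         (auto intro!: continuous_intros Uc)
    obtain B where B: "\<And>t. t \<ge> 0 \<Longrightarrow> norm (U (uf \<phi>) t) \<le> B * exp (lam * t)" using Ub by blast
    have "norm (T0 \<phi> t) \<le> B" for t
    proof -
      have "norm (T0 \<phi> t) = exp (- lam * max t 0) * norm (U (uf \<phi>) (max t 0))" by (simp add: T0_def)
      also have "\<dots> \<le> exp (- lam * max t 0) * (B * exp (lam * max t 0))"
        by (intro mult_left_mono B) auto
      also have "\<dots> = B" by (simp add: exp_minus field_simps)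
      finally show ?thesis .
    qed
    then have "bounded (range (T0 \<phi>))" unfolding bounded_iff by blast
    then show ?thesis using c by (simp add: bcontfun_def)
  qed
  define Top where "Top \<phi> = Bcontfun (T0 \<phi>)" for \<phi>
  have app: "apply_bcontfun (Top \<phi>) = T0 \<phi>" for \<phi>
    using mem by (simp add: Top_def Bcontfun_inverse)
  have contr: "dist (Top \<phi>) (Top \<psi>) \<le> (L / lam\<^sup>2) * dist \<phi> \<psi>" for \<phi> \<psi>
  proof (rule dist_bound)
    fix t :: real
    define d where "d = dist \<phi> \<psi>"
    define t' where "t' = max t 0"
    have t': "t' \<ge> 0" unfolding t'_def by (rule max.cobounded2)
    define H where "H s = g (uf \<phi> s) - g (uf \<psi> s)" for s
    have Hc: "continuous_on UNIV H" unfolding H_def by (intro continuous_intros Fc)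
    have Hb: "norm (H s) \<le> (L * d) * exp (lam * s)" if "s \<in> {0..t'}" for s
    proof -
      have "norm (H s) \<le> L * norm (uf \<phi> s - uf \<psi> s)" unfolding H_def by (rule lip)
      also have "norm (uf \<phi> s - uf \<psi> s) = exp (lam * s) * dist (apply_bcontfun \<phi> s) (apply_bcontfun \<psi> s)"
        using that by (simp add: uf_def dist_norm scaleR_diff_right[symmetric])
      also have "L * (exp (lam * s) * dist (apply_bcontfun \<phi> s) (apply_bcontfun \<psi> s)) \<le> L * (exp (lam * s) * d)"
        unfolding d_def using L by (intro mult_left_mono dist_bounded) auto
      finally show ?thesis by (simp add: algebra_simps)
    qed
    have Iwd: "Iw n (\<lambda>s. g (uf \<phi> s)) s - Iw n (\<lambda>s. g (uf \<psi> s)) s = Iw n H s" for s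
      unfolding H_def by (rule Iw_diff[OF Fc Fc])
    have IwHc: "continuous_on UNIV (Iw n H)" by (rule Iw_cont[OF n Hc])
    have ib: "norm (Iw n H s) \<le> (L * d / lam) * exp (lam * s)" if "s \<in> {0..t'}" for s
    proof -
      have "norm (Iw n H s) \<le> (L * d) * exp (lam * s) / lam"
        by (rule Iw_bound[OF Hc _ lam]) (use that Hb in auto)
      then show ?thesis by simp
    qed
    have "U (uf \<phi>) t' - U (uf \<psi>) t' = integral {0..t'} (Iw n H)"
      unfolding U_def Iwd[symmetric]
      by (subst integral_diff) (auto intro!: integrable_continuous_real continuous_on_subset[OF Iwc])
    moreover have "norm (integral {0..t'} (Iw n H)) \<le> (L * d / lam) * exp (lam * t') / lam"
      by (rule int_bound_exp[OF continuous_on_subset[OF IwHc] t' lam ib]) auto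
    ultimately have "norm (U (uf \<phi>) t' - U (uf \<psi>) t') \<le> (L * d / lam) * exp (lam * t') / lam" by simp
    then have "exp (- lam * t') * norm (U (uf \<phi>) t' - U (uf \<psi>) t') \<le> exp (- lam * t') * ((L * d / lam) * exp (lam * t') / lam)"
      by (intro mult_left_mono) auto
    also have "\<dots> = L / lam\<^sup>2 * d" by (simp add: exp_minus field_simps power2_eq_square)
    finally show "dist (apply_bcontfun (Top \<phi>) t) (apply_bcontfun (Top \<psi>) t) \<le> L / lam\<^sup>2 * dist \<phi> \<psi>"
      by (simp add: app T0_def t'_def[symmetric] d_def dist_norm scaleR_diff_right[symmetric])
  qed
  have c1: "L / lam\<^sup>2 < 1"
  proof -
    have "L < lam\<^sup>2" using L unfolding lam_def power2_eq_square by (simp add: algebra_simps add_pos_pos mult_pos_pos)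
    then show ?thesis using lam by simp
  qed
  obtain \<phi> where fp: "Top \<phi> = \<phi>"
    using banach_fix_type[of "L / lam\<^sup>2" Top] c1 contr L by (auto simp: less_imp_le)
  define u where "u = uf \<phi>"
  have "u t = U u t" if t: "t \<ge> 0" for t
  proof -
    have "apply_bcontfun \<phi> t = exp (- lam * t) *\<^sub>R U u t"
      using arg_cong[OF fp, of "\<lambda>f. apply_bcontfun f t"] t by (simp add: app T0_def u_def)
    then show ?thesis using t by (simp add: u_def uf_def exp_minus)
  qed
  then show ?thesis using ufc[of \<phi>] unfolding u_def U_def by auto
qed




lemma centered_exists:
  fixes V :: "'a::euclidean_space \<Rightarrow> real" and u0 :: 'a
  assumes n: "n \<ge> 2" and L: "L > 0" and lip: "\<And>x y. norm (grad V x - grad V y) \<le> L * norm (x - y)"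
  shows "\<exists>y. centered_sol n V u0 y"
proof -
  obtain u where uc: "continuous_on UNIV u"
    and ueq: "\<And>t. t \<ge> 0 \<Longrightarrow> u t = u0 + integral {0..t} (Iw n (\<lambda>s. grad V (u s)))"
    using exists_fp[OF n L lip, of u0] by blast
  define F where "F = (\<lambda>s. grad V (u s))"
  have gc: "continuous_on S (grad V)" for S using lip_cont[OF lip] L by simp
  have Fc: "continuous_on UNIV F" unfolding F_def
    by (rule continuous_on_compose2[OF gc uc]) auto
  have Iwc: "continuous_on UNIV (Iw n F)" by (rule Iw_cont[OF n Fc])
  define y where "y r = (u (max r 0), Iw n F r)" for r
  have u00: "u 0 = u0" using ueq[of 0] by simp
  have du: "((\<lambda>s. fst (y s)) has_vector_derivative snd (y r)) (at r)" if r: "r > 0" for r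
  proof -
    have "((\<lambda>s. u0 + integral {0..s} (Iw n F)) has_vector_derivative Iw n F r) (at r)"
      using int_deriv_at[OF Iwc r] by (auto intro!: derivative_eq_intros)
    then have "((\<lambda>s. fst (y s)) has_vector_derivative Iw n F r) (at r)"
      by (rule has_vector_derivative_transform_within_open[where S="{0<..}"])
         (use r in \<open>auto simp: y_def ueq F_def\<close>)
    then show ?thesis by (simp add: y_def)
  qed
  have dv: "((\<lambda>s. snd (y s)) has_vector_derivative
      (- ((real n - 1) / r) *\<^sub>R snd (y r) + grad V (fst (y r)))) (at r)" if r: "r > 0" for r
    using Iw_deriv[OF n Fc r] r by (simp add: y_def F_def)
  have yc: "continuous_on UNIV y"
    unfolding y_def
    by (intro continuous_intros Iwc continuous_on_compose2[OF uc]) auto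
  then have "(y \<longlongrightarrow> y 0) (at 0)"
    by (simp add: continuous_on_def)
  moreover have "y 0 = (u0, 0)" by (simp add: y_def u00 Iw_def)
  ultimately have "(y \<longlongrightarrow> (u0, 0)) (at 0)" by simp
  then have "(y \<longlongrightarrow> (u0, 0)) (at_right 0)"
    using tendsto_mono[OF at_le[of "{0<..}" UNIV]] by auto
  moreover have "\<forall>r\<le>0. y r = (u0, 0)" by (auto simp: y_def u00 Iw_def)
  ultimately have "centered_sol n V u0 y"
    unfolding centered_sol_def using du dv by auto
  then show ?thesis by blast
qed

lemma cont_on_0:
  fixes f :: "real \<Rightarrow> 'b::topological_space"
  assumes c: "\<And>r. r > 0 \<Longrightarrow> isCont f r" and l: "(f \<longlongrightarrow> f 0) (at_right 0)"
  shows "continuous_on {0..} f"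
  unfolding continuous_on_eq_continuous_within
proof
  fix r :: real assume r: "r \<in> {0..}"
  show "continuous (at r within {0..}) f"
  proof (cases "r = 0")
    case True
    have "at (0::real) within {0..} = at 0 within {0<..}"
      by (rule at_within_nhd[where S=UNIV]) auto
    then show ?thesis using True l by (simp add: continuous_within)
  next
    case False
    then show ?thesis using r c[of r] by (simp add: continuous_at_imp_continuous_within)
  qed
qed

lemma centered_cont:
  assumes y: "centered_sol n V u0 y"
  shows "continuous_on {0..} (\<lambda>s. fst (y s))" "continuous_on {0..} (\<lambda>s. snd (y s))"
proof -
  have d: "((\<lambda>s. fst (y s)) has_vector_derivative snd (y r)) (at r)"
     "((\<lambda>s. snd (y s)) has_vector_derivative
               (- ((real n - 1) / r) *\<^sub>R snd (y r) + grad V (fst (y r)))) (at r)" if "r > 0" for r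
    using y that unfolding centered_sol_def by auto
  have l: "(y \<longlongrightarrow> (u0, 0)) (at_right 0)" and y0: "y 0 = (u0, 0)"
    using y unfolding centered_sol_def by auto
  show "continuous_on {0..} (\<lambda>s. fst (y s))"
  proof (rule cont_on_0)
    show "isCont (\<lambda>s. fst (y s)) r" if "r > 0" for r
      using d(1)[OF that] by (rule has_vector_derivative_continuous)
    show "((\<lambda>s. fst (y s)) \<longlongrightarrow> fst (y 0)) (at_right 0)"
      using tendsto_fst[OF l] y0 by simp
  qed
  show "continuous_on {0..} (\<lambda>s. snd (y s))"
  proof (rule cont_on_0)
    show "isCont (\<lambda>s. snd (y s)) r" if "r > 0" for r
      using d(2)[OF that] by (rule has_vector_derivative_continuous)
    show "((\<lambda>s. snd (y s)) \<longlongrightarrow> snd (y 0)) (at_right 0)"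
      using tendsto_snd[OF l] y0 by simp
  qed
qed

lemma centered_unique:
  fixes V :: "'a::euclidean_space \<Rightarrow> real" and u0 :: 'a
  assumes n: "n \<ge> 2" and L: "L > 0" and lip: "\<And>x y. norm (grad V x - grad V y) \<le> L * norm (x - y)"
    and y1: "centered_sol n V u0 y1" and y2: "centered_sol n V u0 y2"
  shows "y1 = y2"
proof -
  define g where "g = grad V"
  have lipg: "norm (g x - g y) \<le> L * norm (x - y)" for x y using lip by (simp add: g_def)
  define u1 where "u1 s = fst (y1 s)" for s
  define u2 where "u2 s = fst (y2 s)" for s
  define v1 where "v1 s = snd (y1 s)" for s
  define v2 where "v2 s = snd (y2 s)" for s
  have du1: "(u1 has_vector_derivative v1 r) (at r)" if "r > 0" for r
    using y1 that unfolding centered_sol_def u1_def v1_def by blast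
  have du2: "(u2 has_vector_derivative v2 r) (at r)" if "r > 0" for r
    using y2 that unfolding centered_sol_def u2_def v2_def by blast
  have dv1: "(v1 has_vector_derivative (- ((real n - 1) / r) *\<^sub>R v1 r + g (u1 r))) (at r)" if "r > 0" for r
    using y1 that unfolding centered_sol_def u1_def v1_def g_def by blast
  have dv2: "(v2 has_vector_derivative (- ((real n - 1) / r) *\<^sub>R v2 r + g (u2 r))) (at r)" if "r > 0" for r
    using y2 that unfolding centered_sol_def u2_def v2_def g_def by blast
  have neg1: "y1 r = (u0, 0)" if "r \<le> 0" for r using y1 that by (simp add: centered_sol_def)
  have neg2: "y2 r = (u0, 0)" if "r \<le> 0" for r using y2 that by (simp add: centered_sol_def)
  have lim1: "(y1 \<longlongrightarrow> (u0, 0)) (at_right 0)" using y1 by (simp add: centered_sol_def)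
  have lim2: "(y2 \<longlongrightarrow> (u0, 0)) (at_right 0)" using y2 by (simp add: centered_sol_def)
  have u10: "u1 0 = u0" "v1 0 = 0" using neg1[of 0] by (auto simp: u1_def v1_def)
  have u20: "u2 0 = u0" "v2 0 = 0" using neg2[of 0] by (auto simp: u2_def v2_def)
  have cu1: "continuous_on {0..} u1"
    using centered_cont(1)[OF y1] by (simp add: u1_def[abs_def])
  have cu2: "continuous_on {0..} u2"
    using centered_cont(1)[OF y2] by (simp add: u2_def[abs_def])
  have cv1: "continuous_on {0..} v1"
    using centered_cont(2)[OF y1] by (simp add: v1_def[abs_def])
  have cv2: "continuous_on {0..} v2"
    using centered_cont(2)[OF y2] by (simp add: v2_def[abs_def])
  obtain m where m: "n - 1 = Suc m" using n by (intro that[of "n - 2"]) auto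
  have rn: "real n - 1 = real (Suc m)" using m n by simp
  define \<tau> where "\<tau> = 1 / (2 * L + 2)"
  have tau: "\<tau> > 0" using L by (simp add: \<tau>_def)
  have tauL: "L * \<tau>\<^sup>2 \<le> 1 / 2"
  proof -
    have "2 * L \<le> (2 * L + 2)\<^sup>2" using L by (simp add: power2_eq_square algebra_simps)
    moreover have pos: "(2 * L + 2)\<^sup>2 > 0" using L by simp
    moreover have "L * \<tau>\<^sup>2 = L / (2 * L + 2)\<^sup>2" by (simp add: \<tau>_def power_divide)
    ultimately show ?thesis by (simp add: pos_divide_le_eq)
  qed
  define \<delta> where "\<delta> r = norm (u1 r - u2 r)" for r
  have "continuous_on {0..\<tau>} \<delta>" unfolding \<delta>_def
    by (intro continuous_intros continuous_on_subset[OF cu1] continuous_on_subset[OF cu2]) auto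
  then obtain r0 where r0: "r0 \<in> {0..\<tau>}" and r0max: "\<And>r. r \<in> {0..\<tau>} \<Longrightarrow> \<delta> r \<le> \<delta> r0"
    using continuous_attains_sup[of "{0..\<tau>}" \<delta>] tau by auto
  define M where "M = \<delta> r0"
  have M0: "M \<ge> 0" by (simp add: M_def \<delta>_def)
  have claimA: "norm (v1 s - v2 s) \<le> L * M * s" if s: "s \<in> {0<..\<tau>}" for s
  proof -
    define W where "W t = t ^ (n - 1) *\<^sub>R (v1 t - v2 t)" for t
    have Wc: "continuous_on {0..s} W" unfolding W_def
      by (intro continuous_intros continuous_on_subset[OF cv1] continuous_on_subset[OF cv2]) auto
    have Wd: "(W has_derivative (\<lambda>h. h *\<^sub>R (t ^ (n - 1) *\<^sub>R (g (u1 t) - g (u2 t))))) (at t)"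
      if t: "0 < t" "t < s" for t
    proof -
      have d0: "((\<lambda>t. t ^ Suc m) has_real_derivative (real (Suc m) * t ^ m)) (at t)"
        by (rule derivative_eq_intros refl | simp)+
      have dd: "((\<lambda>t. v1 t - v2 t) has_vector_derivative
          ((- ((real n - 1) / t) *\<^sub>R v1 t + g (u1 t)) - (- ((real n - 1) / t) *\<^sub>R v2 t + g (u2 t)))) (at t)"
        using dv1[of t] dv2[of t] t by (intro derivative_intros) auto
      have "(W has_vector_derivative (t ^ Suc m *\<^sub>R ((- ((real n - 1) / t) *\<^sub>R v1 t + g (u1 t)) - (- ((real n - 1) / t) *\<^sub>R v2 t + g (u2 t)))
            + (real (Suc m) * t ^ m) *\<^sub>R (v1 t - v2 t))) (at t)"
        unfolding W_def m by (rule has_vector_derivative_scaleR[OF d0 dd])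
      moreover have "t ^ Suc m *\<^sub>R ((- ((real n - 1) / t) *\<^sub>R v1 t + g (u1 t)) - (- ((real n - 1) / t) *\<^sub>R v2 t + g (u2 t)))
            + (real (Suc m) * t ^ m) *\<^sub>R (v1 t - v2 t) = t ^ (n - 1) *\<^sub>R (g (u1 t) - g (u2 t))"
      proof -
        have c: "t ^ Suc m * ((real n - 1) / t) = real (Suc m) * t ^ m" using t by (simp add: rn)
        have "t ^ Suc m *\<^sub>R ((- ((real n - 1) / t) *\<^sub>R v1 t + g (u1 t)) - (- ((real n - 1) / t) *\<^sub>R v2 t + g (u2 t)))
            + (real (Suc m) * t ^ m) *\<^sub>R (v1 t - v2 t) = t ^ Suc m *\<^sub>R (g (u1 t) - g (u2 t))
            + (real (Suc m) * t ^ m - t ^ Suc m * ((real n - 1) / t)) *\<^sub>R (v1 t - v2 t)"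
          by (simp add: algebra_simps)
        then show ?thesis unfolding c m by simp
      qed
      ultimately show ?thesis by (simp add: has_vector_derivative_def)
    qed
    obtain x where x: "x \<in> {0<..<s}"
      and xb: "norm (W s - W 0) \<le> norm ((s - 0) *\<^sub>R (x ^ (n - 1) *\<^sub>R (g (u1 x) - g (u2 x))))"
      using mvt_general[OF _ Wc Wd] s by auto
    have W0: "W 0 = 0" using n by (simp add: W_def m)
    have "norm (g (u1 x) - g (u2 x)) \<le> L * M"
    proof -
      have "norm (g (u1 x) - g (u2 x)) \<le> L * \<delta> x" using lipg by (simp add: \<delta>_def)
      also have "\<dots> \<le> L * M" using r0max[of x] x s L by (simp add: M_def)
      finally show ?thesis .
    qed
    then have "norm ((s - 0) *\<^sub>R (x ^ (n - 1) *\<^sub>R (g (u1 x) - g (u2 x)))) \<le> s * (s ^ (n - 1) * (L * M))"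
      using x s by (auto intro!: mult_mono power_mono simp: M0 L less_imp_le)
    moreover have "norm (W s - W 0) = s ^ (n - 1) * norm (v1 s - v2 s)"
      unfolding W0 using s by (simp add: W_def)
    ultimately have "s ^ (n - 1) * norm (v1 s - v2 s) \<le> s ^ (n - 1) * (L * M * s)"
      using xb by (simp add: algebra_simps)
    moreover have "s ^ (n - 1) > 0" using s by simp
    ultimately show ?thesis by (simp add: mult_le_cancel_left_pos)
  qed
  have claimB: "\<delta> r \<le> L * M * \<tau>\<^sup>2" if r: "r \<in> {0..\<tau>}" for r
  proof (cases "r = 0")
    case True then show ?thesis using u10 u20 L M0 by (simp add: \<delta>_def)
  next
    case False
    then have rp: "r > 0" using r by auto
    have fc: "continuous_on {0..r} (\<lambda>t. u1 t - u2 t)"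
      by (intro continuous_intros continuous_on_subset[OF cu1] continuous_on_subset[OF cu2]) (use r in auto)
    have fd: "((\<lambda>t. u1 t - u2 t) has_derivative (\<lambda>h. h *\<^sub>R (v1 t - v2 t))) (at t)" if "0 < t" "t < r" for t
      using du1[of t] du2[of t] that
      by (auto intro!: derivative_eq_intros simp: has_vector_derivative_def scaleR_diff_right)
    obtain x where x: "x \<in> {0<..<r}"
      and xb: "norm ((u1 r - u2 r) - (u1 0 - u2 0)) \<le> norm ((r - 0) *\<^sub>R (v1 x - v2 x))"
      using mvt_general[OF rp fc fd] by auto
    have "norm (v1 x - v2 x) \<le> L * M * x" using claimA[of x] x r by auto
    also have "\<dots> \<le> L * M * \<tau>" using x r L M0 by (intro mult_left_mono) auto
    finally have "r * norm (v1 x - v2 x) \<le> \<tau> * (L * M * \<tau>)"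
      using r rp by (intro mult_mono) auto
    moreover have "norm ((r - 0) *\<^sub>R (v1 x - v2 x)) = r * norm (v1 x - v2 x)" using rp by simp
    ultimately show ?thesis using xb u10 u20 by (simp add: \<delta>_def power2_eq_square algebra_simps)
  qed
  have "M \<le> L * M * \<tau>\<^sup>2" using claimB[OF r0] by (simp add: M_def)
  also have "\<dots> \<le> M / 2" using tauL M0
    using mult_left_mono[OF tauL M0] by (simp add: algebra_simps)
  finally have M00: "M = 0" using M0 by simp
  have equ: "u1 r = u2 r" if "r \<in> {0..\<tau>}" for r
    using r0max[OF that] M00 by (simp add: M_def \<delta>_def)
  have eqv: "v1 r = v2 r" if "r \<in> {0<..\<tau>}" for r
    using claimA[OF that] M00 by simp
  define K where "K = 1 + (real n - 1) / \<tau> + L"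
  have step2: "y1 r = y2 r" if r: "r > \<tau>" for r
  proof -
    define f where "f t = y1 t - y2 t" for t
    define f' where "f' t = (v1 t - v2 t, (- ((real n - 1) / t) *\<^sub>R v1 t + g (u1 t)) - (- ((real n - 1) / t) *\<^sub>R v2 t + g (u2 t)))" for t
    have y1eq: "y1 = (\<lambda>t. (u1 t, v1 t))" by (simp add: u1_def v1_def fun_eq_iff)
    have y2eq: "y2 = (\<lambda>t. (u2 t, v2 t))" by (simp add: u2_def v2_def fun_eq_iff)
    have fd: "(f has_vector_derivative f' t) (at t)" if "t > 0" for t
      unfolding f_def f'_def y1eq y2eq
      using du1[OF that] du2[OF that] dv1[OF that] dv2[OF that]
      by (auto intro!: derivative_eq_intros)
    have fc: "continuous_on {\<tau>..r} f"
    proof (intro continuous_at_imp_continuous_on ballI)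
      fix x assume "x \<in> {\<tau>..r}"
      then have "x > 0" using tau by auto
      then show "isCont f x" by (rule has_vector_derivative_continuous[OF fd])
    qed
    have fb: "norm (f' t) \<le> K * norm (f t)" if t: "\<tau> < t" for t
    proof -
      have tp: "t > 0" using t tau by simp
      have a: "norm (u1 t - u2 t) \<le> norm (f t)" "norm (v1 t - v2 t) \<le> norm (f t)"
        unfolding f_def y1eq y2eq by (simp_all add: norm_fst_le norm_snd_le)
      have "norm (f' t) \<le> norm (v1 t - v2 t) + norm ((- ((real n - 1) / t) *\<^sub>R (v1 t - v2 t)) + (g (u1 t) - g (u2 t)))"
        unfolding f'_def by (rule order_trans[OF norm_Pair_le]) (simp add: algebra_simps scaleR_diff_right)
      also have "\<dots> \<le> norm (v1 t - v2 t) + ((real n - 1) / t * norm (v1 t - v2 t) + L * norm (u1 t - u2 t))"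
        using n tp lipg[of "u1 t" "u2 t"]
        by (intro add_left_mono order_trans[OF norm_triangle_ineq] add_mono) auto
      also have "\<dots> \<le> norm (f t) + ((real n - 1) / \<tau> * norm (f t) + L * norm (f t))"
      proof (intro add_mono mult_mono a)
        show "(real n - 1) / t \<le> (real n - 1) / \<tau>" using n t tau by (intro divide_left_mono) auto
      qed (use n tau L in auto)
      also have "\<dots> = K * norm (f t)" by (simp add: K_def algebra_simps)
      finally show ?thesis .
    qed
    have ftau: "f \<tau> = 0"
      using equ[of \<tau>] eqv[of \<tau>] tau by (simp add: f_def y1eq y2eq)
    have "f r = 0"
      by (rule gronwall_zero[of \<tau> r f f' K]) (use r tau fc fd fb ftau in auto)
    then show ?thesis by (simp add: f_def)
  qed
  show ?thesis
  proof
    fix r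
    consider "r \<le> 0" | "r \<in> {0<..\<tau>}" | "r > \<tau>" by fastforce
    then show "y1 r = y2 r"
    proof cases
      case 1 then show ?thesis using neg1 neg2 by simp
    next
      case 2 then show ?thesis using equ[of r] eqv[of r]
        by (simp add: u1_def u2_def v1_def v2_def prod_eq_iff)
    next
      case 3 then show ?thesis by (rule step2)
    qed
  qed
qed




lemma hvd_fst: "(f has_vector_derivative f') F \<Longrightarrow> ((\<lambda>x. fst (f x)) has_vector_derivative fst f') F"
  unfolding has_vector_derivative_def by (drule has_derivative_fst) simp

lemma hvd_snd: "(f has_vector_derivative f') F \<Longrightarrow> ((\<lambda>x. snd (f x)) has_vector_derivative snd f') F"
  unfolding has_vector_derivative_def by (drule has_derivative_snd) simp

lemma S0_sol:
  fixes V :: "'a::euclidean_space \<Rightarrow> real"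
  assumes V: "V \<in> Vquad k R" and k: "k \<ge> 1" and n: "n \<ge> 2"
  shows "centered_sol n V u0 (S0 n V u0)"
proof -
  obtain L where L: "L > 0" and lip: "\<And>x y. norm (grad V x - grad V y) \<le> L * norm (x - y)"
    using grad_lipschitz[OF V k] by blast
  have ex: "\<exists>!y. centered_sol n V u0 y"
    using centered_exists[OF n L lip] centered_unique[OF n L lip] by blast
  have "S0 n V u0 = (THE y. centered_sol n V u0 y)" by (simp add: S0_def[abs_def])
  then show ?thesis using theI'[OF ex] by simp
qed

lemma link:
  fixes V :: "'a::euclidean_space \<Rightarrow> real"
  assumes n: "n \<ge> 2" and L: "L > 0" and lip: "\<And>x y. norm (grad V x - grad V y) \<le> L * norm (x - y)"
    and y: "centered_sol n V u0 y" and N: "N > 0" and yN: "y N = (uN, wN)"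
    and sd: "stable_data n V u1 \<epsilon>1 c1 p uN wN (1 / N)"
  shows "((\<lambda>r. fst (y r)) \<longlongrightarrow> p) at_top"
proof -
  obtain z :: "real \<Rightarrow> 'a \<times> 'a \<times> real" where zN: "z N = (uN, wN, 1 / N)"
    and zd: "\<And>r. r \<ge> N \<Longrightarrow> (z has_vector_derivative auto_field n V (z r)) (at r within {N..})"
    and zin: "\<And>r. r \<ge> N \<Longrightarrow> z r \<in> cball u1 \<epsilon>1 \<times> UNIV \<times> {0..c1}"
    and zlim: "(z \<longlongrightarrow> (p, 0, 0)) at_top"
    using sd N unfolding stable_data_def by auto
  define a where "a r = fst (z r)" for r
  define b where "b r = fst (snd (z r))" for r
  define c where "c r = snd (snd (z r))" for r
  have zeq: "z r = (a r, b r, c r)" for r by (simp add: a_def b_def c_def)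
  have af: "auto_field n V (z r) = (b r, - ((real n - 1) * c r) *\<^sub>R b r + grad V (a r), - (c r)\<^sup>2)" for r
    by (simp add: zeq auto_field_def)
  have atr: "at r within {N..} = at r" if "r > N" for r
  proof -
    have "at r within {N..} = at r within UNIV"
      by (rule at_within_nhd[where S="{N<..}"]) (use that in auto)
    then show ?thesis by simp
  qed
  have zdi: "(z has_vector_derivative auto_field n V (z r)) (at r)" if "r > N" for r
    using zd[of r] that atr[OF that] by simp
  have zc: "continuous_on {N..T} z" for T
  proof -
    have "continuous_on {N..} z"
      unfolding continuous_on_eq_continuous_within
      using zd by (auto intro: has_vector_derivative_continuous)
    then show ?thesis by (rule continuous_on_subset) auto
  qed
  have ad: "(a has_vector_derivative b r) (at r)" if "r > N" for r
    using hvd_fst[OF zdi[OF that]] by (simp add: a_def[abs_def] af)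
  have bd: "(b has_vector_derivative (- ((real n - 1) * c r) *\<^sub>R b r + grad V (a r))) (at r)" if "r > N" for r
    using hvd_fst[OF hvd_snd[OF zdi[OF that]]] by (simp add: b_def[abs_def] af)
  have cd: "(c has_vector_derivative (- (c r)\<^sup>2)) (at r)" if "r > N" for r
    using hvd_snd[OF hvd_snd[OF zdi[OF that]]] by (simp add: c_def[abs_def] af)
  have crange: "0 \<le> c r \<and> c r \<le> c1" if "r \<ge> N" for r
    using zin[OF that] by (simp add: zeq)
  have cc: "continuous_on {N..T} c" for T
    unfolding c_def by (intro continuous_intros zc)
  have cinv: "c r = 1 / r" if r: "r \<ge> N" for r
  proof -
    define q where "q t = t * c t - 1" for t
    have qd: "(q has_vector_derivative (- c t * q t)) (at t)" if "t > N" for t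
    proof -
      have "(c has_real_derivative (- (c t)\<^sup>2)) (at t)"
        using cd[OF that] by (simp add: has_real_derivative_iff_has_vector_derivative)
      then have "((\<lambda>z. z * c z) has_real_derivative (1 * c t + (- (c t)\<^sup>2) * t)) (at t)"
        by (rule DERIV_mult[OF DERIV_ident])
      then have "(q has_real_derivative (1 * c t + (- (c t)\<^sup>2) * t - 0)) (at t)"
        unfolding q_def[abs_def] by (rule DERIV_diff) (rule DERIV_const)
      moreover have "1 * c t + (- (c t)\<^sup>2) * t - 0 = - c t * q t"
        by (simp add: q_def power2_eq_square algebra_simps)
      ultimately show ?thesis by (simp add: has_real_derivative_iff_has_vector_derivative)
    qed
    have "q r = 0"
    proof (rule gronwall_zero[of N r q "\<lambda>t. - c t * q t" c1])
      show "continuous_on {N..r} q" unfolding q_def by (intro continuous_intros cc)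
      show "norm (- c t * q t) \<le> c1 * norm (q t)" if "N < t" "t < r" for t
        using crange[of t] that by (auto simp: abs_mult intro!: mult_right_mono)
      show "q N = 0" using zN N by (simp add: q_def c_def)
    qed (use r qd in auto)
    then show ?thesis using r N by (simp add: q_def field_simps)
  qed
  define K where "K = 1 + (real n - 1) / N + L"
  have yd: "(y has_vector_derivative (snd (y r), - ((real n - 1) / r) *\<^sub>R snd (y r) + grad V (fst (y r)))) (at r)"
    if "r > 0" for r
  proof -
    have "((\<lambda>s. (fst (y s), snd (y s))) has_vector_derivative (snd (y r), - ((real n - 1) / r) *\<^sub>R snd (y r) + grad V (fst (y r)))) (at r)"
      using y that unfolding centered_sol_def by (intro has_vector_derivative_Pair) auto
    then show ?thesis by simp
  qed
  have aeq: "a r = fst (y r)" if r: "r \<ge> N" for r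
  proof -
    define e where "e t = (a t - fst (y t), b t - snd (y t))" for t
    define e' where "e' t = (b t - snd (y t), (- ((real n - 1) * c t) *\<^sub>R b t + grad V (a t))
        - (- ((real n - 1) / t) *\<^sub>R snd (y t) + grad V (fst (y t))))" for t
    have yd1: "((\<lambda>s. fst (y s)) has_vector_derivative snd (y t)) (at t)"
      and yd2: "((\<lambda>s. snd (y s)) has_vector_derivative (- ((real n - 1) / t) *\<^sub>R snd (y t) + grad V (fst (y t)))) (at t)"
      if "t > 0" for t
      using y that unfolding centered_sol_def by auto
    have ed: "(e has_vector_derivative e' t) (at t)" if "t > N" for t
      unfolding e_def[abs_def] e'_def
      using ad[OF that] bd[OF that] yd1[of t] yd2[of t] that N
      by (intro derivative_intros has_vector_derivative_Pair) auto
    have ec: "continuous_on {N..r} e"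
      unfolding e_def a_def b_def using N
      by (intro continuous_intros zc continuous_on_subset[OF centered_cont(1)[OF y]]
            continuous_on_subset[OF centered_cont(2)[OF y]]) auto
    have eb: "norm (e' t) \<le> K * norm (e t)" if t: "N < t" "t < r" for t
    proof -
      have tp: "t > 0" using t N by simp
      have ct: "c t = 1 / t" using cinv[of t] t by simp
      define du where "du = a t - fst (y t)"
      define dv where "dv = b t - snd (y t)"
      have ee: "e t = (du, dv)" by (simp add: e_def du_def dv_def)
      define k where "k = (real n - 1) / t"
      have kc: "(real n - 1) * c t = k" by (simp add: ct k_def)
      have ee': "e' t = (dv, - ((real n - 1) / t) *\<^sub>R dv + (grad V (a t) - grad V (fst (y t))))"
        unfolding e'_def kc k_def[symmetric] dv_def by (simp add: algebra_simps)
      have a: "norm du \<le> norm (e t)" "norm dv \<le> norm (e t)"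
        unfolding ee by (simp_all add: norm_fst_le norm_snd_le)
      have "norm (e' t) \<le> norm dv + norm (- ((real n - 1) / t) *\<^sub>R dv + (grad V (a t) - grad V (fst (y t))))"
        unfolding ee' by (rule norm_Pair_le)
      also have "\<dots> \<le> norm dv + ((real n - 1) / t * norm dv + L * norm du)"
        using n tp lip[of "a t" "fst (y t)"]
        by (intro add_left_mono order_trans[OF norm_triangle_ineq] add_mono) (auto simp: du_def)
      also have "\<dots> \<le> norm (e t) + ((real n - 1) / N * norm (e t) + L * norm (e t))"
      proof (intro add_mono mult_mono a)
        show "(real n - 1) / t \<le> (real n - 1) / N" using n t N by (intro divide_left_mono) auto
      qed (use n N L in auto)
      also have "\<dots> = K * norm (e t)" by (simp add: K_def algebra_simps)
      finally show ?thesis .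
    qed
    have eN: "e N = 0" using zN yN by (simp add: e_def a_def b_def zero_prod_def)
    have "e r = 0"
      by (rule gronwall_zero[of N r e e' K]) (use r ec ed eb eN in auto)
    then show ?thesis by (simp add: e_def prod_eq_iff)
  qed
  have "(a \<longlongrightarrow> p) at_top"
    using tendsto_fst[OF zlim] by (simp add: a_def[abs_def])
  moreover have "eventually (\<lambda>r. a r = fst (y r)) at_top"
    using aeq by (auto simp: eventually_at_top_linorder)
  ultimately show ?thesis using tendsto_cong[of a "\<lambda>r. fst (y r)" at_top p] by simp
qed



theorem proposition4p3:
  fixes n k N :: nat and R \<epsilon>1 c1 :: real
    and V1 :: "'a::euclidean_space \<Rightarrow> real" and u1inf :: 'a
    and \<Lambda> :: "('a \<Rightarrow> real) set"
    and uinf :: "('a \<Rightarrow> real) \<Rightarrow> 'a"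
    and w :: "('a \<Rightarrow> real) \<Rightarrow> 'a \<Rightarrow> real \<Rightarrow> 'a"
  assumes n2: "n \<ge> 2" and k1: "k \<ge> 1" and Rpos: "R > 0"
    and nbhd: "is_nbhd_Vquad k R \<Lambda> V1"
    and V1min: "nondeg_min_point V1 u1inf"
    and eps1: "\<epsilon>1 > 0" and c1: "c1 > 0"
    and uinf_V1: "uinf V1 = u1inf"
    and uinf_min: "\<forall>V\<in>\<Lambda>. local_min_point V (uinf V)"
    and w_cont: "\<forall>V\<in>\<Lambda>. continuous_on (cball u1inf \<epsilon>1 \<times> {0..c1}) (\<lambda>(u, c). w V u c)"
    and w_Ck: "\<forall>V\<in>\<Lambda>. Ck_on k (ball u1inf \<epsilon>1 \<times> {0<..<c1}) (\<lambda>(u, c). w V u c)"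
    and w_char: "\<forall>V\<in>\<Lambda>. \<forall>u0\<in>cball u1inf \<epsilon>1. \<forall>v0. \<forall>c0\<in>{0<..c1}.
                    (v0 = w V u0 c0 \<longleftrightarrow> stable_data n V u1inf \<epsilon>1 c1 (uinf V) u0 v0 c0)"
    and N: "real N \<ge> 1 / c1"
  defines "PhiInvW \<equiv> {(u0, uN, V). uN \<in> ball u1inf \<epsilon>1 \<and> V \<in> \<Lambda> \<and>
                          S0 n V u0 (real N) = (uN, w V uN (1 / real N))}"
    and "SLam \<equiv> {(V, u). V \<in> \<Lambda> \<and> u \<in> radial_set n V (uinf V) \<and> u (real N) \<in> ball u1inf \<epsilon>1}"
    and "F \<equiv> (\<lambda>(u0, uN, V). (V, \<lambda>r. fst (S0 n V u0 r)))"
  shows "F ` PhiInvW \<subseteq> SLam \<and> inj_on F PhiInvW"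
proof -
  have LV: "\<Lambda> \<subseteq> Vquad k R" using nbhd by (simp add: is_nbhd_Vquad_def)
  have Npos: "real N > 0" using N c1 by (smt (verit) divide_pos_pos)
  have cN: "1 / real N \<in> {0<..c1}"
  proof -
    have "1 \<le> c1 * real N" using N c1 by (simp add: divide_le_eq mult.commute)
    then show ?thesis using Npos by (simp add: divide_le_eq mult.commute)
  qed
  have sol: "centered_sol n V u0 (S0 n V u0)" if "V \<in> \<Lambda>" for V u0
    using S0_sol[OF _ k1 n2] LV that by blast
  have part1: "F x \<in> SLam" if x: "x \<in> PhiInvW" for x
  proof -
    obtain u0 uN V where xe: "x = (u0, uN, V)" by (cases x) auto
    have uN: "uN \<in> ball u1inf \<epsilon>1" and V: "V \<in> \<Lambda>"
      and SN: "S0 n V u0 (real N) = (uN, w V uN (1 / real N))"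
      using x by (auto simp: PhiInvW_def xe)
    define y where "y = S0 n V u0"
    have y: "centered_sol n V u0 y" using sol[OF V] by (simp add: y_def)
    obtain L where L: "L > 0" and lip: "\<And>x y. norm (grad V x - grad V y) \<le> L * norm (x - y)"
      using grad_lipschitz[of V k R] LV V k1 by blast
    have sd: "stable_data n V u1inf \<epsilon>1 c1 (uinf V) uN (w V uN (1 / real N)) (1 / real N)"
    proof -
      have "uN \<in> cball u1inf \<epsilon>1" using uN by auto
      then show ?thesis using w_char V cN by blast
    qed
    have lim: "((\<lambda>r. fst (y r)) \<longlongrightarrow> uinf V) at_top"
      by (rule link[OF n2 L lip y Npos _ sd]) (simp add: y_def SN)
    have d: "((\<lambda>s. fst (y s)) has_vector_derivative snd (y r)) (at r) \<and>
        ((\<lambda>s. snd (y s)) has_vector_derivative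
           (- ((real n - 1) / r) *\<^sub>R snd (y r) + grad V (fst (y r)))) (at r)" if "r > 0" for r
      using y that unfolding centered_sol_def by blast
    have l0: "((\<lambda>r. snd (y r)) \<longlongrightarrow> 0) (at_right 0)"
      using tendsto_snd[of y "(u0, 0)" "at_right 0"] y by (simp add: centered_sol_def)
    have "(\<lambda>r. fst (y r)) \<in> radial_set n V (uinf V)"
      unfolding radial_set_def
      using centered_cont(1)[OF y] d l0 lim by (intro CollectI exI[of _ "\<lambda>r. snd (y r)"]) auto
    moreover have "fst (y (real N)) \<in> ball u1inf \<epsilon>1" using SN uN by (simp add: y_def)
    ultimately show ?thesis using V by (simp add: xe F_def SLam_def y_def)
  qed
  have part2: "inj_on F PhiInvW"
  proof (rule inj_onI)
    fix x x' assume x: "x \<in> PhiInvW" and x': "x' \<in> PhiInvW" and eq: "F x = F x'"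
    obtain u0 uN V where xe: "x = (u0, uN, V)" by (cases x) auto
    obtain u0' uN' V' where xe': "x' = (u0', uN', V')" by (cases x') auto
    have V: "V \<in> \<Lambda>" and SN: "S0 n V u0 (real N) = (uN, w V uN (1 / real N))"
      using x by (auto simp: PhiInvW_def xe)
    have V': "V' \<in> \<Lambda>" and SN': "S0 n V' u0' (real N) = (uN', w V' uN' (1 / real N))"
      using x' by (auto simp: PhiInvW_def xe')
    have VV: "V' = V" and ff: "(\<lambda>r. fst (S0 n V u0 r)) = (\<lambda>r. fst (S0 n V' u0' r))"
      using eq by (auto simp: F_def xe xe')
    have "S0 n V u0 0 = (u0, 0)" using sol[OF V, of u0] by (simp add: centered_sol_def)
    moreover have "S0 n V u0' 0 = (u0', 0)" using sol[OF V, of u0'] by (simp add: centered_sol_def)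
    ultimately have uu: "u0' = u0" using fun_cong[OF ff, of 0] VV by simp
    have "uN = fst (S0 n V u0 (real N))" using SN by simp
    also have "\<dots> = uN'" using SN' VV uu by simp
    finally show "x = x'" using xe xe' VV uu by simp
  qed
  show ?thesis using part1 part2 by auto
qed

end
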